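(* Let $G$ be a mixed graph with short and long arcs. Then $G$ contains neither a directed long cycle nor a directed short cycle if and only if there exist mappings $\sigma_1,\sigma_2:V(G)\to\mathbb{N}$ such that: (1) for all $u,v\in V(G)$, $u$ and $v$ are connected by an undirected walk if and only if $(\sigma_1(u),\sigma_2(u))=(\sigma_1(v),\sigma_2(v))$; (2) for all $u,v\in V(G)$, there is a walk from $u$ to $v$ in $G$ using only edges and short arcs if and only if $\sigma_1(u)=\sigma_1(v)$; (3) for all $u,v\in V(G)$, if there is a directed short walk from $u$ to $v$ in $G$ then $\sigma_2(u)<\sigma_2(v)$; (4) for all $u,v\in V(G)$, if there is a directed long walk from $u$ to $v$ in $G$ then $\sigma_1(u)<\sigma_1(v)$.
   Context: A mixed graph $G$ has vertices, undirected edges $E(G)$ and arcs $A(G)$, where $A(G)$ is partitioned into short arcs and long arcs. A walk is a sequence $v_0,e_1,v_1,\dots,e_\ell,v_\ell$ ($\ell\ge0$) where each $e_i$ is an edge or arc joining $v_{i-1}$ and $v_i$; arcs may be traversed in either direction. A walk is undirected if it contains only edges, short if it contains a short arc but no long arc, and long if it contains a long arc. A walk from $u$ to $v$ is directed if either it is short and every short arc on it is traversed from tail to head, or it is long and every long arc on it is traversed from tail to head (short arcs then arbitrary). A cycle is a closed walk ($\ell\ge1$, $v_\ell=v_0$) with distinct $v_0,\dots,v_{\ell-1}$ and distinct $e_1,\dots,e_\ell$; it is directed short (resp. long) if it is a directed short (resp. long) walk. *)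

theory Defs
  imports Main
begin

text \<open>A mixed graph: vertex set, undirected edges, short arcs and long arcs (edge identifiers
 of type 'e, so parallel edges and loops are allowed). Every edge/arc e has endpoints
 tl e and hd e; for arcs these are tail and head, for undirected edges just the two ends.\<close>

record ('v,'e) mgraph =
  verts :: "'v set"
  uedges :: "'e set"
  sarcs :: "'e set"
  larcs :: "'e set"
  tl :: "'e \<Rightarrow> 'v"
  hd :: "'e \<Rightarrow> 'v"

definition mixed_graph :: "('v,'e) mgraph \<Rightarrow> bool" where
  "mixed_graph G \<longleftrightarrow> finite (verts G) \<and> finite (uedges G) \<and> finite (sarcs G) \<and> finite (larcs G)
     \<and> uedges G \<inter> sarcs G = {} \<and> uedges G \<inter> larcs G = {} \<and> sarcs G \<inter> larcs G = {}
     \<and> (\<forall>e \<in> uedges G \<union> sarcs G \<union> larcs G. tl G e \<in> verts G \<and> hd G e \<in> verts G)"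

definition arcs :: "('v,'e) mgraph \<Rightarrow> 'e set" where
  "arcs G = sarcs G \<union> larcs G"

definition step_ok :: "('v,'e) mgraph \<Rightarrow> 'v \<times> 'e \<times> 'v \<Rightarrow> bool" where
  "step_ok G s = (case s of (x, e, y) \<Rightarrow>
      e \<in> uedges G \<union> arcs G \<and> {x, y} = {tl G e, hd G e})"

fun walk :: "('v,'e) mgraph \<Rightarrow> 'v \<Rightarrow> ('v \<times> 'e \<times> 'v) list \<Rightarrow> 'v \<Rightarrow> bool" where
  "walk G u [] v \<longleftrightarrow> u \<in> verts G \<and> u = v"
| "walk G u ((x, e, y) # ps) v \<longleftrightarrow> x = u \<and> step_ok G (x, e, y) \<and> walk G y ps v"

definition walk_edges :: "('v \<times> 'e \<times> 'v) list \<Rightarrow> 'e list" where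
  "walk_edges ps = map (\<lambda>(x,e,y). e) ps"

definition undirected_walk :: "('v,'e) mgraph \<Rightarrow> ('v \<times> 'e \<times> 'v) list \<Rightarrow> bool" where
  "undirected_walk G ps \<longleftrightarrow> set (walk_edges ps) \<subseteq> uedges G"

definition short_walk :: "('v,'e) mgraph \<Rightarrow> ('v \<times> 'e \<times> 'v) list \<Rightarrow> bool" where
  "short_walk G ps \<longleftrightarrow> set (walk_edges ps) \<inter> sarcs G \<noteq> {} \<and> set (walk_edges ps) \<inter> larcs G = {}"

definition long_walk :: "('v,'e) mgraph \<Rightarrow> ('v \<times> 'e \<times> 'v) list \<Rightarrow> bool" where
  "long_walk G ps \<longleftrightarrow> set (walk_edges ps) \<inter> larcs G \<noteq> {}"

definition forward_on :: "('v,'e) mgraph \<Rightarrow> 'e set \<Rightarrow> ('v \<times> 'e \<times> 'v) list \<Rightarrow> bool" where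
  "forward_on G A ps \<longleftrightarrow> (\<forall>(x,e,y) \<in> set ps. e \<in> A \<longrightarrow> x = tl G e \<and> y = hd G e)"

definition directed_walk :: "('v,'e) mgraph \<Rightarrow> ('v \<times> 'e \<times> 'v) list \<Rightarrow> bool" where
  "directed_walk G ps \<longleftrightarrow>
     (short_walk G ps \<and> forward_on G (sarcs G) ps) \<or> (long_walk G ps \<and> forward_on G (larcs G) ps)"

definition directed_short_walk :: "('v,'e) mgraph \<Rightarrow> 'v \<Rightarrow> ('v \<times> 'e \<times> 'v) list \<Rightarrow> 'v \<Rightarrow> bool" where
  "directed_short_walk G u ps v \<longleftrightarrow> walk G u ps v \<and> short_walk G ps \<and> directed_walk G ps"

definition directed_long_walk :: "('v,'e) mgraph \<Rightarrow> 'v \<Rightarrow> ('v \<times> 'e \<times> 'v) list \<Rightarrow> 'v \<Rightarrow> bool" where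
  "directed_long_walk G u ps v \<longleftrightarrow> walk G u ps v \<and> long_walk G ps \<and> directed_walk G ps"

definition cycle :: "('v,'e) mgraph \<Rightarrow> 'v \<Rightarrow> ('v \<times> 'e \<times> 'v) list \<Rightarrow> bool" where
  "cycle G v0 ps \<longleftrightarrow> ps \<noteq> [] \<and> walk G v0 ps v0 \<and> distinct (map fst ps) \<and> distinct (walk_edges ps)"

definition has_directed_short_cycle :: "('v,'e) mgraph \<Rightarrow> bool" where
  "has_directed_short_cycle G \<longleftrightarrow> (\<exists>v0 ps. cycle G v0 ps \<and> directed_short_walk G v0 ps v0)"

definition has_directed_long_cycle :: "('v,'e) mgraph \<Rightarrow> bool" where
  "has_directed_long_cycle G \<longleftrightarrow> (\<exists>v0 ps. cycle G v0 ps \<and> directed_long_walk G v0 ps v0)"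

end

theory Submission
  imports Defs
begin

lemma walk_append: "walk G u ps v \<Longrightarrow> walk G v qs w \<Longrightarrow> walk G u (ps @ qs) w"
  by (induction G u ps v rule: walk.induct) auto

lemma walk_verts: "mixed_graph G \<Longrightarrow> walk G u ps v \<Longrightarrow> u \<in> verts G \<and> v \<in> verts G"
proof (induction G u ps v rule: walk.induct)
  case (1 G u v)
  then show ?case by auto
next
  case (2 G u x e y ps v)
  then have "e \<in> uedges G \<union> sarcs G \<union> larcs G" "{x, y} = {tl G e, hd G e}"
    by (auto simp: step_ok_def arcs_def)
  then have "x \<in> verts G" using 2(2) unfolding mixed_graph_def by (auto simp: doubleton_eq_iff)
  then show ?case using 2 by auto
qed

lemma walk_split: "mixed_graph G \<Longrightarrow> walk G u (ps @ qs) w \<Longrightarrow> \<exists>v. walk G u ps v \<and> walk G v qs w"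
proof (induction ps arbitrary: u)
  case Nil
  then show ?case using walk_verts by fastforce
next
  case (Cons s ps)
  obtain x e y where s: "s = (x,e,y)" by (cases s) auto
  show ?case using Cons.prems Cons.IH[of y] by (auto simp: s)
qed

lemma walk_nth: assumes "mixed_graph G" "walk G u r v" "i < length r"
  shows "walk G u (take i r) (fst (r!i)) \<and> walk G (snd (snd (r!i))) (drop (Suc i) r) v
     \<and> walk G (fst (r!i)) (drop i r) v"
proof -
  have r: "r = take i r @ (r!i) # drop (Suc i) r" using assms(3) by (simp add: id_take_nth_drop)
  obtain a e b where ri: "r!i = (a,e,b)" by (cases "r!i") auto
  from walk_split[OF assms(1), of u "take i r" "(r!i) # drop (Suc i) r" v] r assms(2)
  obtain m where "walk G u (take i r) m" "walk G m ((a,e,b) # drop (Suc i) r) v" by (auto simp: ri)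
  then show ?thesis using assms(3) by (auto simp: ri Cons_nth_drop_Suc[symmetric])
qed

lemma shortest_path:
  assumes mg: "mixed_graph G" and w: "walk G y qs x"
  shows "\<exists>qs'. walk G y qs' x \<and> set qs' \<subseteq> set qs \<and> distinct (map fst qs') \<and> x \<notin> set (map fst qs')
     \<and> distinct (walk_edges qs')"
proof -
  let ?P = "\<lambda>r. walk G y r x \<and> set r \<subseteq> set qs"
  obtain r where r: "?P r" "\<forall>r'. ?P r' \<longrightarrow> length r \<le> length r'"
    using ex_has_least_nat[of ?P qs length] w by auto
  have 1: "x \<notin> set (map fst r)"
  proof
    assume "x \<in> set (map fst r)"
    then obtain i where i: "i < length r" "fst (r!i) = x" by (auto simp: in_set_conv_nth)
    then have "walk G y (take i r) x" using walk_nth[OF mg r(1)[THEN conjunct1] i(1)] by simp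
    moreover have "set (take i r) \<subseteq> set qs" using r(1) set_take_subset by fastforce
    ultimately have "length r \<le> length (take i r)" using r(2) by blast
    then show False using i by simp
  qed
  have 2: "distinct (map fst r)"
  proof (rule ccontr)
    assume "\<not> distinct (map fst r)"
    then obtain i j where ij: "i < j" "j < length r" "fst (r!i) = fst (r!j)"
      by (auto simp: distinct_conv_nth) (metis linorder_neqE_nat)
    have a: "walk G y (take i r) (fst (r!j))" using walk_nth[OF mg r(1)[THEN conjunct1], of i] ij by simp
    have b: "walk G (fst (r!j)) (drop j r) x" using walk_nth[OF mg r(1)[THEN conjunct1], of j] ij by simp
    have "walk G y (take i r @ drop j r) x" using walk_append[OF a b] .
    moreover have "set (take i r @ drop j r) \<subseteq> set qs" using r(1) set_take_subset set_drop_subset by fastforce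
    ultimately have "length r \<le> length (take i r @ drop j r)" using r(2) by blast
    then show False using ij by simp
  qed
  have 3: "distinct (walk_edges r)"
  proof (rule ccontr)
    assume "\<not> distinct (walk_edges r)"
    moreover have we: "\<And>k. k < length r \<Longrightarrow> walk_edges r ! k = fst (snd (r!k))" "length (walk_edges r) = length r"
      by (auto simp: walk_edges_def split: prod.splits)
    ultimately obtain i j where ij0: "i \<noteq> j" "i < length r" "j < length r" "fst (snd (r!i)) = fst (snd (r!j))"
      by (auto simp: distinct_conv_nth)
    then obtain i j where ij: "i < j" "j < length r" "fst (snd (r!i)) = fst (snd (r!j))"
      by (metis linorder_neqE_nat)
    obtain a e b where ri: "r!i = (a,e,b)" by (cases "r!i") auto
    obtain c e' d where rj: "r!j = (c,e',d)" by (cases "r!j") auto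
    have "step_ok G (r!i)" "step_ok G (r!j)" using r(1) ij
      by (metis (no_types, lifting) walk_nth mg order.strict_trans Cons_nth_drop_Suc walk.simps(2) prod.collapse)+
    then have "{a,b} = {c,d}" using ij ri rj by (auto simp: step_ok_def)
    moreover have "a \<noteq> c" using 2 ij ri rj by (auto simp: distinct_conv_nth) (metis fst_conv nat_neq_iff order.strict_trans)
    ultimately have ad: "a = d" by (auto simp: doubleton_eq_iff)
    have a: "walk G y (take i r) d" using walk_nth[OF mg r(1)[THEN conjunct1], of i] ij ri ad by simp
    have b: "walk G d (drop (Suc j) r) x" using walk_nth[OF mg r(1)[THEN conjunct1], of j] ij rj by simp
    have "walk G y (take i r @ drop (Suc j) r) x" using walk_append[OF a b] .
    moreover have "set (take i r @ drop (Suc j) r) \<subseteq> set qs" using r(1) set_take_subset set_drop_subset by fastforce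
    ultimately have "length r \<le> length (take i r @ drop (Suc j) r)" using r(2) by blast
    then show False using ij by simp
  qed
  show ?thesis using r(1) 1 2 3 by blast
qed


lemma dlw_char: "directed_long_walk G u ps v \<longleftrightarrow> walk G u ps v \<and> long_walk G ps \<and> forward_on G (larcs G) ps"
  unfolding directed_long_walk_def directed_walk_def short_walk_def long_walk_def by auto

lemma dsw_char: "directed_short_walk G u ps v \<longleftrightarrow> walk G u ps v \<and> short_walk G ps \<and> forward_on G (sarcs G) ps"
  unfolding directed_short_walk_def directed_walk_def short_walk_def long_walk_def by auto

lemma forward_append: "forward_on G A (ps @ qs) \<longleftrightarrow> forward_on G A ps \<and> forward_on G A qs"
  unfolding forward_on_def by (simp add: ball_Un)

lemma forward_subset: "set qs \<subseteq> set ps \<Longrightarrow> forward_on G A ps \<Longrightarrow> forward_on G A qs"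
  unfolding forward_on_def by auto

lemma forward_none: "set (walk_edges qs) \<inter> A = {} \<Longrightarrow> forward_on G A qs"
  unfolding forward_on_def walk_edges_def by force

lemma walk_edges_append: "walk_edges (ps @ qs) = walk_edges ps @ walk_edges qs"
  unfolding walk_edges_def by simp

lemma walk_edges_subset: "set qs \<subseteq> set ps \<Longrightarrow> set (walk_edges qs) \<subseteq> set (walk_edges ps)"
  unfolding walk_edges_def by (simp add: image_mono)

lemma closed_to_cycle:
  assumes mg: "mixed_graph G" and w: "walk G u ps u" and xa: "(x,a,y) \<in> set ps"
    and A: "a \<in> A" and fw: "forward_on G A ps"
  shows "\<exists>qs. set qs \<subseteq> set ps \<and> cycle G x ((x,a,y) # qs)"
proof -
  obtain B C where ps: "ps = B @ (x,a,y) # C" using xa by (meson split_list)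
  obtain m where m: "walk G u B m" "walk G m ((x,a,y) # C) u" using walk_split[OF mg] w ps by blast
  then have st: "step_ok G (x,a,y)" "walk G y C u" "m = x" by auto
  have "walk G y (C @ B) x" using walk_append[OF st(2)] m(1) st(3) by simp
  then obtain qs where qs: "walk G y qs x" "set qs \<subseteq> set (C @ B)" "distinct (map fst qs)"
      "x \<notin> set (map fst qs)" "distinct (walk_edges qs)"
    using shortest_path[OF mg] by blast
  have sub: "set qs \<subseteq> set ps" using qs(2) ps by auto
  have tla: "x = tl G a" using fw xa A unfolding forward_on_def by auto
  have "a \<notin> set (walk_edges qs)"
  proof
    assume "a \<in> set (walk_edges qs)"
    then obtain p q where "(p,a,q) \<in> set qs" unfolding walk_edges_def by auto
    then have "(p,a,q) \<in> set ps" "p \<in> set (map fst qs)" using sub by force+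
    then have "p = tl G a" using fw A unfolding forward_on_def by fastforce
    then show False using \<open>p \<in> set (map fst qs)\<close> tla qs(4) by simp
  qed
  then have "cycle G x ((x,a,y) # qs)"
    unfolding cycle_def using qs st by (simp add: walk_edges_def)
  then show ?thesis using sub by blast
qed

lemma long_cyc: assumes mg: "mixed_graph G" and d: "directed_long_walk G u ps u"
  shows "has_directed_long_cycle G"
proof -
  have w: "walk G u ps u" "long_walk G ps" "forward_on G (larcs G) ps" using d unfolding dlw_char by auto
  then obtain x a y where xa: "(x,a,y) \<in> set ps" "a \<in> larcs G"
    unfolding long_walk_def walk_edges_def by auto
  obtain qs where qs: "set qs \<subseteq> set ps" "cycle G x ((x,a,y) # qs)"
    using closed_to_cycle[OF mg w(1) xa(1) xa(2) w(3)] by blast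
  have "walk G x ((x,a,y) # qs) x" using qs unfolding cycle_def by simp
  moreover have "long_walk G ((x,a,y) # qs)" using xa unfolding long_walk_def walk_edges_def by auto
  moreover have "forward_on G (larcs G) ((x,a,y) # qs)"
    using forward_subset[OF _ w(3), of "(x,a,y) # qs"] qs xa by auto
  ultimately show ?thesis using qs unfolding has_directed_long_cycle_def dlw_char by blast
qed

lemma short_cyc: assumes mg: "mixed_graph G" and d: "directed_short_walk G u ps u"
  shows "has_directed_short_cycle G"
proof -
  have w: "walk G u ps u" "short_walk G ps" "forward_on G (sarcs G) ps" using d unfolding dsw_char by auto
  then obtain x a y where xa: "(x,a,y) \<in> set ps" "a \<in> sarcs G"
    unfolding short_walk_def walk_edges_def by auto
  obtain qs where qs: "set qs \<subseteq> set ps" "cycle G x ((x,a,y) # qs)"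
    using closed_to_cycle[OF mg w(1) xa(1) xa(2) w(3)] by blast
  have "walk G x ((x,a,y) # qs) x" using qs unfolding cycle_def by simp
  moreover have "short_walk G ((x,a,y) # qs)"
  proof -
    have "set (walk_edges ((x,a,y) # qs)) \<subseteq> set (walk_edges ps)"
      using walk_edges_subset[of "(x,a,y) # qs" ps] qs xa by auto
    moreover have "a \<in> set (walk_edges ((x,a,y)#qs))" by (simp add: walk_edges_def)
    moreover from w(2) have "set (walk_edges ps) \<inter> larcs G = {}" by (simp add: short_walk_def)
    ultimately show ?thesis using xa(2) unfolding short_walk_def by blast
  qed
  moreover have "forward_on G (sarcs G) ((x,a,y) # qs)"
    using forward_subset[OF _ w(3), of "(x,a,y) # qs"] qs xa by auto
  ultimately show ?thesis using qs unfolding has_directed_short_cycle_def dsw_char by blast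
qed

lemma rank_exists:
  fixes V :: "'a set" and E Q :: "'a \<Rightarrow> 'a \<Rightarrow> bool"
  assumes fin: "finite V"
  and rfl: "\<forall>u\<in>V. E u u" and sym: "\<forall>u\<in>V. \<forall>v\<in>V. E u v \<longrightarrow> E v u"
  and trn: "\<forall>u\<in>V. \<forall>v\<in>V. \<forall>w\<in>V. E u v \<longrightarrow> E v w \<longrightarrow> E u w"
  and qtrans: "\<forall>u\<in>V. \<forall>v\<in>V. \<forall>w\<in>V. Q u v \<longrightarrow> Q v w \<longrightarrow> Q u w"
  and qirr: "\<forall>u\<in>V. \<not> Q u u"
  and compat: "\<forall>u\<in>V. \<forall>u'\<in>V. \<forall>w\<in>V. E u u' \<longrightarrow> Q w u \<longrightarrow> Q w u'"
  shows "\<exists>f::'a\<Rightarrow>nat. (\<forall>u\<in>V. \<forall>v\<in>V. f u = f v \<longleftrightarrow> E u v) \<and> (\<forall>u\<in>V. \<forall>v\<in>V. Q u v \<longrightarrow> f u < f v)"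
proof -
  define cls where "cls u = {w\<in>V. E u w}" for u
  define p where "p u = card {w\<in>V. Q w u}" for u
  have "finite (cls ` V)" using fin by simp
  from finite_imp_inj_to_nat_seg[OF this]
  obtain g :: "'a set \<Rightarrow> nat" and n where g: "g ` (cls ` V) = {i. i < n}" "inj_on g (cls ` V)"
    by blast
  define f where "f u = p u * n + g (cls u)" for u
  have glt: "g (cls u) < n" if "u\<in>V" for u
  proof -
    have "g (cls u) \<in> g ` (cls ` V)" using that by simp
    then show ?thesis using g(1) by simp
  qed
  have clsE: "u\<in>V \<Longrightarrow> v\<in>V \<Longrightarrow> cls u = cls v \<longleftrightarrow> E u v" for u v
  proof
    assume "u\<in>V" "v\<in>V" "cls u = cls v"
    then have "v \<in> cls u" using rfl unfolding cls_def by simp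
    then show "E u v" unfolding cls_def by simp
  next
    assume "u\<in>V" "v\<in>V" "E u v"
    have "E u w \<longleftrightarrow> E v w" if "w \<in> V" for w
      using sym trn that \<open>u\<in>V\<close> \<open>v\<in>V\<close> \<open>E u v\<close> by meson
    then show "cls u = cls v" unfolding cls_def by auto
  qed
  have pE: "u\<in>V \<Longrightarrow> v\<in>V \<Longrightarrow> E u v \<Longrightarrow> p u = p v" for u v
  proof -
    assume a: "u\<in>V" "v\<in>V" "E u v"
    have "Q w u \<longleftrightarrow> Q w v" if "w \<in> V" for w
      using compat sym that a by meson
    then have "{w\<in>V. Q w u} = {w\<in>V. Q w v}" by auto
    then show ?thesis unfolding p_def by simp
  qed
  have pQ: "u\<in>V \<Longrightarrow> v\<in>V \<Longrightarrow> Q u v \<Longrightarrow> p u < p v" for u v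
  proof -
    assume a: "u\<in>V" "v\<in>V" "Q u v"
    have "Q w v" if "w \<in> V" "Q w u" for w using qtrans that a by meson
    then have "{w\<in>V. Q w u} \<subseteq> {w\<in>V. Q w v}" by auto
    moreover have "u \<in> {w\<in>V. Q w v} - {w\<in>V. Q w u}" using a qirr by auto
    ultimately have "{w\<in>V. Q w u} \<subset> {w\<in>V. Q w v}" by blast
    then show ?thesis unfolding p_def using fin by (simp add: psubset_card_mono)
  qed
  have fQ: "u\<in>V \<Longrightarrow> v\<in>V \<Longrightarrow> p u < p v \<Longrightarrow> f u < f v" for u v
  proof -
    assume a: "u\<in>V" "v\<in>V" "p u < p v"
    have "f u < p u * n + n" unfolding f_def using glt a by simp
    also have "\<dots> = Suc (p u) * n" by simp
    also have "\<dots> \<le> p v * n" using a by (intro mult_le_mono1) simp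
    also have "\<dots> \<le> f v" unfolding f_def by simp
    finally show ?thesis .
  qed
  have "\<forall>u\<in>V. \<forall>v\<in>V. f u = f v \<longleftrightarrow> E u v"
  proof (intro ballI iffI)
    fix u v assume a: "u\<in>V" "v\<in>V" "f u = f v"
    have "p u = p v"
    proof (rule ccontr)
      assume "p u \<noteq> p v"
      then have "p u < p v \<or> p v < p u" by arith
      then have "f u < f v \<or> f v < f u" using fQ a(1,2) by blast
      then show False using a(3) by simp
    qed
    then have "g (cls u) = g (cls v)" using a unfolding f_def by simp
    moreover have "cls u \<in> cls ` V" "cls v \<in> cls ` V" using a by simp_all
    ultimately have "cls u = cls v" using inj_onD[OF g(2)] by blast
    then show "E u v" using clsE a by blast
  next
    fix u v assume a: "u\<in>V" "v\<in>V" "E u v"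
    have "p u = p v" by (rule pE[OF a])
    moreover have "cls u = cls v" using clsE a by blast
    ultimately show "f u = f v" unfolding f_def by simp
  qed
  moreover have "\<forall>u\<in>V. \<forall>v\<in>V. Q u v \<longrightarrow> f u < f v"
  proof (intro ballI impI)
    fix u v assume "u\<in>V" "v\<in>V" "Q u v"
    then show "f u < f v" using fQ pQ by simp
  qed
  ultimately show ?thesis by blast
qed


definition rvw :: "('v \<times> 'e \<times> 'v) list \<Rightarrow> ('v \<times> 'e \<times> 'v) list" where
  "rvw ps = rev (map (\<lambda>(x,e,y). (y,e,x)) ps)"

lemma rvw_edges: "set (walk_edges (rvw ps)) = set (walk_edges ps)"
  unfolding rvw_def walk_edges_def by force

lemma walk_rev: "mixed_graph G \<Longrightarrow> walk G u ps v \<Longrightarrow> walk G v (rvw ps) u"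
proof (induction G u ps v rule: walk.induct)
  case (1 G u v)
  then show ?case by (auto simp: rvw_def)
next
  case (2 G u x e y ps v)
  have ux: "x = u" "step_ok G (x,e,y)" "walk G y ps v" using 2(3) by auto
  have "u \<in> verts G" using walk_verts[OF 2(2) 2(3)] by simp
  then have "walk G y [(y,e,x)] x" using ux by (auto simp: step_ok_def insert_commute)
  then have "walk G v (rvw ps @ [(y,e,x)]) x" by (rule walk_append[OF 2(1)[OF 2(2) ux(3)]])
  then show ?case using ux by (simp add: rvw_def)
qed

lemma undirected_edges: "mixed_graph G \<Longrightarrow> undirected_walk G ps \<Longrightarrow>
   set (walk_edges ps) \<inter> larcs G = {} \<and> set (walk_edges ps) \<inter> sarcs G = {}"
  unfolding mixed_graph_def undirected_walk_def by blast

theorem mainTheorem15: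
  fixes G :: "('v,'e) mgraph"
  assumes "mixed_graph G"
  shows "(\<not> has_directed_long_cycle G \<and> \<not> has_directed_short_cycle G) \<longleftrightarrow>
    (\<exists>(\<sigma>1 :: 'v \<Rightarrow> nat) (\<sigma>2 :: 'v \<Rightarrow> nat).
       (\<forall>u \<in> verts G. \<forall>v \<in> verts G.
          (\<exists>ps. walk G u ps v \<and> undirected_walk G ps) \<longleftrightarrow> (\<sigma>1 u, \<sigma>2 u) = (\<sigma>1 v, \<sigma>2 v)) \<and>
       (\<forall>u \<in> verts G. \<forall>v \<in> verts G.
          (\<exists>ps. walk G u ps v \<and> set (walk_edges ps) \<inter> larcs G = {}) \<longleftrightarrow> \<sigma>1 u = \<sigma>1 v) \<and>
       (\<forall>u \<in> verts G. \<forall>v \<in> verts G.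
          (\<exists>ps. directed_short_walk G u ps v) \<longrightarrow> \<sigma>2 u < \<sigma>2 v) \<and>
       (\<forall>u \<in> verts G. \<forall>v \<in> verts G.
          (\<exists>ps. directed_long_walk G u ps v) \<longrightarrow> \<sigma>1 u < \<sigma>1 v))"
proof
  assume nc: "\<not> has_directed_long_cycle G \<and> \<not> has_directed_short_cycle G"
  have mg: "mixed_graph G" by (rule assms)
  have fin: "finite (verts G)" using mg unfolding mixed_graph_def by simp
  define SC where "SC u v = (\<exists>ps. walk G u ps v \<and> set (walk_edges ps) \<inter> larcs G = {})" for u v
  define UC where "UC u v = (\<exists>ps. walk G u ps v \<and> undirected_walk G ps)" for u v
  define DL where "DL u v = (\<exists>ps. directed_long_walk G u ps v)" for u v
  define DS where "DS u v = (\<exists>ps. directed_short_walk G u ps v)" for u v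
  have "\<exists>f::'v\<Rightarrow>nat. (\<forall>u\<in>verts G. \<forall>v\<in>verts G. f u = f v \<longleftrightarrow> SC u v) \<and>
      (\<forall>u\<in>verts G. \<forall>v\<in>verts G. DL u v \<longrightarrow> f u < f v)"
  proof (rule rank_exists[OF fin])
    show "\<forall>u\<in>verts G. SC u u"
    proof
      fix u assume "u \<in> verts G"
      then have "walk G u [] u \<and> set (walk_edges []) \<inter> larcs G = {}" by (simp add: walk_edges_def)
      then show "SC u u" unfolding SC_def by blast
    qed
    show "\<forall>u\<in>verts G. \<forall>v\<in>verts G. SC u v \<longrightarrow> SC v u"
    proof (intro ballI impI)
      fix u v assume "SC u v"
      then obtain p where p: "walk G u p v" "set (walk_edges p) \<inter> larcs G = {}" unfolding SC_def by blast
      have "walk G v (rvw p) u" by (rule walk_rev[OF mg p(1)])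
      moreover have "set (walk_edges (rvw p)) \<inter> larcs G = {}" using p(2) by (simp only: rvw_edges)
      ultimately show "SC v u" unfolding SC_def by blast
    qed
    show "\<forall>u\<in>verts G. \<forall>v\<in>verts G. \<forall>w\<in>verts G. SC u v \<longrightarrow> SC v w \<longrightarrow> SC u w"
    proof (intro ballI impI)
      fix u v w assume "SC u v" "SC v w"
      then obtain p q where "walk G u p v" "set (walk_edges p) \<inter> larcs G = {}"
        "walk G v q w" "set (walk_edges q) \<inter> larcs G = {}" unfolding SC_def by blast
      then have "walk G u (p @ q) w" "set (walk_edges (p @ q)) \<inter> larcs G = {}"
        using walk_append[of G u p v q w] by (auto simp: walk_edges_append)
      then show "SC u w" unfolding SC_def by blast
    qed
    show "\<forall>u\<in>verts G. \<forall>v\<in>verts G. \<forall>w\<in>verts G. DL u v \<longrightarrow> DL v w \<longrightarrow> DL u w"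
    proof (intro ballI impI)
      fix u v w assume "DL u v" "DL v w"
      then obtain p q where p: "directed_long_walk G u p v" and q: "directed_long_walk G v q w"
        unfolding DL_def by blast
      have "walk G u (p @ q) w" by (rule walk_append) (use p q in \<open>auto simp: dlw_char\<close>)
      moreover have "long_walk G (p @ q)" using p unfolding dlw_char long_walk_def walk_edges_append by auto
      moreover have "forward_on G (larcs G) (p @ q)" using p q unfolding dlw_char forward_append by blast
      ultimately show "DL u w" unfolding DL_def dlw_char by blast
    qed
    show "\<forall>u\<in>verts G. \<not> DL u u" using nc long_cyc[OF mg] unfolding DL_def by blast
    show "\<forall>u\<in>verts G. \<forall>u'\<in>verts G. \<forall>w\<in>verts G. SC u u' \<longrightarrow> DL w u \<longrightarrow> DL w u'"
    proof (intro ballI impI)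
      fix u u' w assume "SC u u'" "DL w u"
      then obtain q p where q: "walk G u q u'" "set (walk_edges q) \<inter> larcs G = {}"
        and p: "directed_long_walk G w p u" unfolding SC_def DL_def by blast
      have "walk G w (p @ q) u'" by (rule walk_append) (use p q in \<open>auto simp: dlw_char\<close>)
      moreover have "long_walk G (p @ q)" using p unfolding dlw_char long_walk_def walk_edges_append by auto
      moreover have "forward_on G (larcs G) (p @ q)" using p forward_none[OF q(2)]
        unfolding dlw_char forward_append by blast
      ultimately show "DL w u'" unfolding DL_def dlw_char by blast
    qed
  qed
  then obtain s1 :: "'v \<Rightarrow> nat" where s1: "\<forall>u\<in>verts G. \<forall>v\<in>verts G. s1 u = s1 v \<longleftrightarrow> SC u v"
    "\<forall>u\<in>verts G. \<forall>v\<in>verts G. DL u v \<longrightarrow> s1 u < s1 v" by blast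
  have "\<exists>f::'v\<Rightarrow>nat. (\<forall>u\<in>verts G. \<forall>v\<in>verts G. f u = f v \<longleftrightarrow> UC u v) \<and>
      (\<forall>u\<in>verts G. \<forall>v\<in>verts G. DS u v \<longrightarrow> f u < f v)"
  proof (rule rank_exists[OF fin])
    show "\<forall>u\<in>verts G. UC u u"
    proof
      fix u assume "u \<in> verts G"
      then have "walk G u [] u \<and> undirected_walk G []" by (simp add: walk_edges_def undirected_walk_def)
      then show "UC u u" unfolding UC_def by blast
    qed
    show "\<forall>u\<in>verts G. \<forall>v\<in>verts G. UC u v \<longrightarrow> UC v u"
    proof (intro ballI impI)
      fix u v assume "UC u v"
      then obtain p where p: "walk G u p v" "undirected_walk G p" unfolding UC_def by blast
      have "walk G v (rvw p) u" by (rule walk_rev[OF mg p(1)])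
      moreover have "undirected_walk G (rvw p)" using p(2) by (simp only: undirected_walk_def rvw_edges)
      ultimately show "UC v u" unfolding UC_def by blast
    qed
    show "\<forall>u\<in>verts G. \<forall>v\<in>verts G. \<forall>w\<in>verts G. UC u v \<longrightarrow> UC v w \<longrightarrow> UC u w"
    proof (intro ballI impI)
      fix u v w assume "UC u v" "UC v w"
      then obtain p q where "walk G u p v" "set (walk_edges p) \<subseteq> uedges G"
        "walk G v q w" "set (walk_edges q) \<subseteq> uedges G" unfolding UC_def undirected_walk_def by blast
      then have "walk G u (p @ q) w" "undirected_walk G (p @ q)"
        using walk_append[of G u p v q w] by (auto simp: walk_edges_append undirected_walk_def)
      then show "UC u w" unfolding UC_def by blast
    qed
    show "\<forall>u\<in>verts G. \<forall>v\<in>verts G. \<forall>w\<in>verts G. DS u v \<longrightarrow> DS v w \<longrightarrow> DS u w"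
    proof (intro ballI impI)
      fix u v w assume "DS u v" "DS v w"
      then obtain p q where p: "directed_short_walk G u p v" and q: "directed_short_walk G v q w"
        unfolding DS_def by blast
      have "walk G u (p @ q) w" by (rule walk_append) (use p q in \<open>auto simp: dsw_char\<close>)
      moreover have "short_walk G (p @ q)" using p q unfolding dsw_char short_walk_def walk_edges_append by auto
      moreover have "forward_on G (sarcs G) (p @ q)" using p q unfolding dsw_char forward_append by blast
      ultimately show "DS u w" unfolding DS_def dsw_char by blast
    qed
    show "\<forall>u\<in>verts G. \<not> DS u u" using nc short_cyc[OF mg] unfolding DS_def by blast
    show "\<forall>u\<in>verts G. \<forall>u'\<in>verts G. \<forall>w\<in>verts G. UC u u' \<longrightarrow> DS w u \<longrightarrow> DS w u'"
    proof (intro ballI impI)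
      fix u u' w assume "UC u u'" "DS w u"
      then obtain q p where q: "walk G u q u'" "undirected_walk G q"
        and p: "directed_short_walk G w p u" unfolding UC_def DS_def by blast
      have qe: "set (walk_edges q) \<inter> larcs G = {}" "set (walk_edges q) \<inter> sarcs G = {}"
        using undirected_edges[OF mg q(2)] by auto
      have "walk G w (p @ q) u'" by (rule walk_append) (use p q in \<open>auto simp: dsw_char\<close>)
      moreover have "short_walk G (p @ q)" using p qe unfolding dsw_char short_walk_def walk_edges_append by auto
      moreover have "forward_on G (sarcs G) (p @ q)" using p forward_none[OF qe(2)]
        unfolding dsw_char forward_append by blast
      ultimately show "DS w u'" unfolding DS_def dsw_char by blast
    qed
  qed
  then obtain s2 :: "'v \<Rightarrow> nat" where s2: "\<forall>u\<in>verts G. \<forall>v\<in>verts G. s2 u = s2 v \<longleftrightarrow> UC u v"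
    "\<forall>u\<in>verts G. \<forall>v\<in>verts G. DS u v \<longrightarrow> s2 u < s2 v" by blast
  have UCSC: "UC u v \<Longrightarrow> SC u v" for u v
    unfolding UC_def SC_def using undirected_edges[OF mg] by blast
  have c1: "\<forall>u \<in> verts G. \<forall>v \<in> verts G. UC u v \<longleftrightarrow> (s1 u, s2 u) = (s1 v, s2 v)"
  proof (intro ballI)
    fix u v assume uv: "u \<in> verts G" "v \<in> verts G"
    have "s1 u = s1 v \<longleftrightarrow> SC u v" "s2 u = s2 v \<longleftrightarrow> UC u v" using s1(1) s2(1) uv by simp_all
    then show "UC u v \<longleftrightarrow> (s1 u, s2 u) = (s1 v, s2 v)" using UCSC by auto
  qed
  have f1: "\<forall>u \<in> verts G. \<forall>v \<in> verts G.
          (\<exists>ps. walk G u ps v \<and> undirected_walk G ps) \<longleftrightarrow> (s1 u, s2 u) = (s1 v, s2 v)"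
    using c1 by (simp only: UC_def)
  have f2: "\<forall>u \<in> verts G. \<forall>v \<in> verts G.
          (\<exists>ps. walk G u ps v \<and> set (walk_edges ps) \<inter> larcs G = {}) \<longleftrightarrow> s1 u = s1 v"
    using s1(1) unfolding SC_def by blast
  have f3: "\<forall>u \<in> verts G. \<forall>v \<in> verts G.
          (\<exists>ps. directed_short_walk G u ps v) \<longrightarrow> s2 u < s2 v"
    using s2(2) by (simp only: DS_def)
  have f4: "\<forall>u \<in> verts G. \<forall>v \<in> verts G.
          (\<exists>ps. directed_long_walk G u ps v) \<longrightarrow> s1 u < s1 v"
    using s1(2) by (simp only: DL_def)
  show "\<exists>(\<sigma>1 :: 'v \<Rightarrow> nat) (\<sigma>2 :: 'v \<Rightarrow> nat).
       (\<forall>u \<in> verts G. \<forall>v \<in> verts G.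
          (\<exists>ps. walk G u ps v \<and> undirected_walk G ps) \<longleftrightarrow> (\<sigma>1 u, \<sigma>2 u) = (\<sigma>1 v, \<sigma>2 v)) \<and>
       (\<forall>u \<in> verts G. \<forall>v \<in> verts G.
          (\<exists>ps. walk G u ps v \<and> set (walk_edges ps) \<inter> larcs G = {}) \<longleftrightarrow> \<sigma>1 u = \<sigma>1 v) \<and>
       (\<forall>u \<in> verts G. \<forall>v \<in> verts G.
          (\<exists>ps. directed_short_walk G u ps v) \<longrightarrow> \<sigma>2 u < \<sigma>2 v) \<and>
       (\<forall>u \<in> verts G. \<forall>v \<in> verts G.
          (\<exists>ps. directed_long_walk G u ps v) \<longrightarrow> \<sigma>1 u < \<sigma>1 v)"
    by (rule exI[of _ s1], rule exI[of _ s2]) (intro conjI f1 f2 f3 f4)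
next
  assume "\<exists>(\<sigma>1 :: 'v \<Rightarrow> nat) (\<sigma>2 :: 'v \<Rightarrow> nat).
       (\<forall>u \<in> verts G. \<forall>v \<in> verts G.
          (\<exists>ps. walk G u ps v \<and> undirected_walk G ps) \<longleftrightarrow> (\<sigma>1 u, \<sigma>2 u) = (\<sigma>1 v, \<sigma>2 v)) \<and>
       (\<forall>u \<in> verts G. \<forall>v \<in> verts G.
          (\<exists>ps. walk G u ps v \<and> set (walk_edges ps) \<inter> larcs G = {}) \<longleftrightarrow> \<sigma>1 u = \<sigma>1 v) \<and>
       (\<forall>u \<in> verts G. \<forall>v \<in> verts G.
          (\<exists>ps. directed_short_walk G u ps v) \<longrightarrow> \<sigma>2 u < \<sigma>2 v) \<and>
       (\<forall>u \<in> verts G. \<forall>v \<in> verts G.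
          (\<exists>ps. directed_long_walk G u ps v) \<longrightarrow> \<sigma>1 u < \<sigma>1 v)"
  then obtain s1 s2 :: "'v \<Rightarrow> nat" where
    s3: "\<forall>u \<in> verts G. \<forall>v \<in> verts G. (\<exists>ps. directed_short_walk G u ps v) \<longrightarrow> s2 u < s2 v" and
    s4: "\<forall>u \<in> verts G. \<forall>v \<in> verts G. (\<exists>ps. directed_long_walk G u ps v) \<longrightarrow> s1 u < s1 v"
    by blast
  have "\<not> has_directed_long_cycle G"
  proof
    assume "has_directed_long_cycle G"
    then obtain v0 ps where "directed_long_walk G v0 ps v0" unfolding has_directed_long_cycle_def by blast
    moreover then have "v0 \<in> verts G" using walk_verts[OF assms] unfolding dlw_char by blast
    ultimately show False using s4 by blast
  qed
  moreover have "\<not> has_directed_short_cycle G"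
  proof
    assume "has_directed_short_cycle G"
    then obtain v0 ps where "directed_short_walk G v0 ps v0" unfolding has_directed_short_cycle_def by blast
    moreover then have "v0 \<in> verts G" using walk_verts[OF assms] unfolding dsw_char by blast
    ultimately show False using s3 by blast
  qed
  ultimately show "\<not> has_directed_long_cycle G \<and> \<not> has_directed_short_cycle G" by blast
qed

end
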